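(* Under the standing setup below (including the initialisation assumptions and $\|\mathbf{X}\|_2\le R$), there is a constant $C>0$ depending only on $N,d,d_v,K,\epsilon,R$ (not on $\alpha$ or $\mathbf{X}$) such that for every $\alpha>0$ and every $\mathbf{X}\in\mathbb{R}^{N\times d}$ with $\|\mathbf{X}\|_2\le R$ and $\mathbf{M}\neq0$, $$\|\mathbf{J}_1(\mathbf{X})\|_2\le C\alpha,\qquad \mathbf{J}_1(\mathbf{X})=(\mathbf{X}\mathbf{W}^V\mathbf{W}^O\otimes\mathbf{I}_N)^\top\frac{\partial\,\mathrm{vec}\,\mathbf{A}(\mathbf{X})}{\partial\,\mathrm{vec}\,\mathbf{X}}.$$
   Context: Standing setup. Fix integers $N,d,d_v\ge1$ with $2d_v\le d$ and $2d_v\le N$, an integer $K\ge0$ (number of Newton–Schulz iterations), $\epsilon>0$, $R>0$ and a scalar $\alpha>0$. For $\mathbf{X}\in\mathbb{R}^{N\times d}$ and weights $\mathbf{W}^Q,\mathbf{W}^K\in\mathbb{R}^{d\times d_v}$, set $\mathbf{Q}=\mathbf{X}\mathbf{W}^Q$, $\mathbf{K}=\mathbf{X}\mathbf{W}^K$, $\mathbf{M}=[\mathbf{Q},\mathbf{K}]\in\mathbb{R}^{N\times 2d_v}$, $\mathbf{M}_0=\mathbf{M}/(\|\mathbf{M}\|_F+\epsilon)$, $\mathbf{M}_{k+1}=\frac12\mathbf{M}_k(3\mathbf{I}_{2d_v}-\mathbf{M}_k^\top\mathbf{M}_k)$, and $\mathbf{B}=\mathbf{M}_K$. Let $\mathbf{S}=\frac{\alpha}{\sqrt{d_v}}(\mathbf{Q}\mathbf{K}^\top-\mathbf{K}\mathbf{Q}^\top)$,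 $[\mathbf{S}]=\mathbf{B}^\top\mathbf{S}\mathbf{B}\in\mathbb{R}^{2d_v\times2d_v}$, $\mathbf{A}(\mathbf{X})=\mathbf{I}_N+\mathbf{B}(\exp([\mathbf{S}])-\mathbf{I}_{2d_v})\mathbf{B}^\top$, and $\mathrm{OSA}(\mathbf{X})=\mathbf{A}(\mathbf{X})\mathbf{X}\mathbf{W}^V\mathbf{W}^O$ with $\mathbf{W}^V\in\mathbb{R}^{d\times d_v}$, $\mathbf{W}^O\in\mathbb{R}^{d_v\times d}$. Initialisation assumptions: $[\mathbf{W}^Q,\mathbf{W}^K]$ has orthonormal columns, and $\mathbf{W}^V$ and $(\mathbf{W}^O)^\top$ each have orthonormal columns. $\|\cdot\|_2$ is the spectral norm, $\|\cdot\|_F$ the Frobenius norm, $\mathrm{vec}$ column-major vectorisation, $\otimes$ the Kronecker product, and $\partial\,\mathrm{vec}\,F/\partial\,\mathrm{vec}\,\mathbf{X}$ the Jacobian of the vectorised map. *)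

theory Defs
  imports "HOL-Analysis.Analysis"
begin

text \<open>Matrices are rendered as HOL-Analysis nested vectors: an m x n real matrix
  is an element of real^'n^'m (row index of type 'm, column index of type 'n).
  The dimensions N, d, d_v are the cardinalities of finite types 'N, 'd, 'v;
  the dimension 2 d_v is rendered by the sum type 'v + 'v (columns Inl j belong
  to the first block, Inr j to the second block).\<close>

definition spec_norm :: "real^'n^'m \<Rightarrow> real" where
  "spec_norm A = onorm (\<lambda>x. A *v x)"

definition frob_norm :: "real^'n^'m \<Rightarrow> real" where
  "frob_norm A = sqrt (\<Sum>i\<in>UNIV. \<Sum>j\<in>UNIV. (A $ i $ j)^2)"

primrec mat_pow :: "real^'n^'n \<Rightarrow> nat \<Rightarrow> real^'n^'n" where
  "mat_pow A 0 = mat 1"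
| "mat_pow A (Suc k) = A ** mat_pow A k"

definition mat_exp :: "real^'n^'n \<Rightarrow> real^'n^'n" where
  "mat_exp A = (\<Sum>k. (1 / fact k) *\<^sub>R mat_pow A k)"

definition hcat :: "real^'b^'m \<Rightarrow> real^'c^'m \<Rightarrow> real^('b + 'c)^'m" where
  "hcat P Q = (\<chi> i j. case j of Inl a \<Rightarrow> P $ i $ a | Inr b \<Rightarrow> Q $ i $ b)"

text \<open>Column-major vectorisation: the entry in row i and column j goes to
  index (j, i); pairs are ordered lexicographically, so this is the usual
  column-major order.\<close>
definition vecm :: "real^'n^'m \<Rightarrow> real^('n \<times> 'm)" where
  "vecm A = (\<chi> p. A $ snd p $ fst p)"

definition unvecm :: "real^('n \<times> 'm) \<Rightarrow> real^'n^'m" where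
  "unvecm v = (\<chi> i j. v $ (j, i))"

text \<open>Kronecker product, with row/column indices (outer, inner).\<close>
definition kron :: "real^'b^'a \<Rightarrow> real^'d^'c \<Rightarrow> real^('b \<times> 'd)^('a \<times> 'c)" where
  "kron A B = (\<chi> p q. A $ fst p $ fst q * B $ snd p $ snd q)"

definition ns_step :: "real^'n^'m \<Rightarrow> real^'n^'m" where
  "ns_step M = (1/2) *\<^sub>R (M ** (3 *\<^sub>R mat 1 - transpose M ** M))"

definition OSA_B :: "real \<Rightarrow> nat \<Rightarrow> real^(('v::finite) + 'v)^('d::finite) \<Rightarrow> real^'d^('N::finite) \<Rightarrow> real^('v + 'v)^'N" where
  "OSA_B \<epsilon> K WQK X =
     (let M = X ** WQK; M0 = (1 / (frob_norm M + \<epsilon>)) *\<^sub>R M in (ns_step ^^ K) M0)"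

definition OSA_A :: "real \<Rightarrow> nat \<Rightarrow> real \<Rightarrow> real^('v::finite)^('d::finite) \<Rightarrow> real^'v^'d \<Rightarrow> real^'d^('N::finite) \<Rightarrow> real^'N^'N" where
  "OSA_A \<epsilon> K \<alpha> WQ WK X =
     (let Q = X ** WQ; Kk = X ** WK;
          B = OSA_B \<epsilon> K (hcat WQ WK) X;
          S = (\<alpha> / sqrt (real CARD('v))) *\<^sub>R (Q ** transpose Kk - Kk ** transpose Q);
          Sb = transpose B ** S ** B
      in mat 1 + B ** (mat_exp Sb - mat 1) ** transpose B)"

definition OSA_J1 :: "real \<Rightarrow> nat \<Rightarrow> real \<Rightarrow> real^('v::finite)^('d::finite) \<Rightarrow> real^'v^'d \<Rightarrow> real^'v^'d \<Rightarrow> real^'d^'v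
    \<Rightarrow> real^'d^('N::finite) \<Rightarrow> real^('d \<times> 'N)^('d \<times> 'N)" where
  "OSA_J1 \<epsilon> K \<alpha> WQ WK WV WO X =
     transpose (kron (X ** WV ** WO) (mat 1 :: real^'N^'N))
     ** jacobian (\<lambda>v. vecm (OSA_A \<epsilon> K \<alpha> WQ WK (unvecm v))) (at (vecm X))"

end

theory Submission
  imports Defs
begin

lemma norm_sq_vec: "norm (x::'a::real_normed_vector^'n) ^ 2 = (\<Sum>i\<in>UNIV. norm (x$i) ^ 2)"
  unfolding norm_vec_def L2_set_def by (simp add: sum_nonneg)

lemma frob_norm_eq: "frob_norm A = norm A"
proof -
  have "norm A = sqrt (norm A ^ 2)" by simp
  also have "norm A ^ 2 = (\<Sum>i\<in>UNIV. \<Sum>j\<in>UNIV. (A $ i $ j)^2)"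
    unfolding norm_sq_vec by (simp add: norm_sq_vec)
  finally show ?thesis unfolding frob_norm_def by simp
qed

lemma norm_mat_sq: "norm (A::real^'n^'m) ^ 2 = (\<Sum>i\<in>UNIV. \<Sum>j\<in>UNIV. (A $ i $ j)^2)"
  unfolding norm_sq_vec by (simp add: norm_sq_vec)

lemma norm_mv_le: "norm ((A::real^'n^'m) *v x) \<le> norm A * norm x"
proof -
  have "norm (A *v x) ^ 2 = (\<Sum>i\<in>UNIV. ((A$i) \<bullet> x)^2)"
    by (simp add: norm_sq_vec matrix_mult_dot)
  also have "\<dots> \<le> (\<Sum>i\<in>UNIV. (norm (A$i) * norm x)^2)"
    by (intro sum_mono iffD1[OF abs_le_square_iff]) (simp add: Cauchy_Schwarz_ineq2)
  also have "\<dots> = (\<Sum>i\<in>UNIV. norm (A$i)^2) * norm x ^ 2"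
    by (simp only: power_mult_distrib sum_distrib_right)
  also have "\<dots> = (norm A * norm x)^2"
    by (simp only: power_mult_distrib norm_sq_vec[of A])
  finally show ?thesis by (rule power2_le_imp_le) simp
qed

lemma norm_transpose: "norm (transpose (A::real^'n^'m)) = norm A"
proof -
  have "norm (transpose A) ^ 2 = norm A ^ 2"
    unfolding norm_mat_sq transpose_def by (simp, rule sum.swap)
  then show ?thesis by (simp add: power2_eq_iff_nonneg)
qed

lemma row_mm: "(A ** B) $ i = (A $ i) v* B"
  by (simp add: matrix_matrix_mult_def vector_matrix_mult_def vec_eq_iff)

lemma norm_vm_le: "norm (x v* (B::real^'n^'m)) \<le> norm B * norm x"
  using norm_mv_le[of "transpose B" x] by (simp add: norm_transpose)

lemma norm_mm_le: "norm ((A::real^'n^'m) ** (B::real^'k^'n)) \<le> norm A * norm B"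
proof -
  have "norm (A ** B) ^ 2 = (\<Sum>i\<in>UNIV. norm (transpose B *v (A$i))^2)"
    by (simp add: norm_sq_vec row_mm)
  also have "\<dots> \<le> (\<Sum>i\<in>UNIV. (norm B * norm (A$i))^2)"
    by (intro sum_mono power_mono) (simp_all add: norm_vm_le)
  also have "\<dots> = norm B^2 * (\<Sum>i\<in>UNIV. norm (A$i)^2)"
    by (simp add: power_mult_distrib sum_distrib_left)
  also have "\<dots> = (norm A * norm B)^2"
    by (simp add: power_mult_distrib norm_sq_vec[of A])
  finally show ?thesis by (rule power2_le_imp_le) simp
qed

lemma orth_mv: assumes "transpose Q ** (Q::real^'n^'m) = mat 1" shows "norm (Q *v x) = norm x"
proof -
  have "norm (Q *v x) ^2 = (Q *v x) \<bullet> (Q *v x)" by (simp add: power2_norm_eq_inner)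
  also have "\<dots> = ((Q *v x) v* Q) \<bullet> x" by (metis dot_lmul_matrix)
  also have "(Q *v x) v* Q = (transpose Q ** Q) *v x"
    by (metis transpose_matrix_vector matrix_vector_mul_assoc)
  also have "((transpose Q ** Q) *v x) \<bullet> x = norm x ^ 2" using assms by (simp add: power2_norm_eq_inner)
  finally show ?thesis by (simp add: power2_eq_iff_nonneg)
qed

lemma orth_right: assumes "(Q::real^'n^'n) ** transpose Q = mat 1" shows "norm ((A::real^'n^'m) ** Q) = norm A"
proof -
  have t: "transpose (transpose Q) ** transpose Q = mat 1" using assms by simp
  have "norm (A ** Q) ^ 2 = (\<Sum>i\<in>UNIV. norm (transpose Q *v (A$i))^2)"
    by (simp add: norm_sq_vec row_mm)
  also have "\<dots> = norm A ^ 2" by (simp only: orth_mv[OF t] norm_sq_vec)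
  finally show ?thesis by (simp add: power2_eq_iff_nonneg)
qed

lemma orth_left: assumes "transpose Q ** (Q::real^'n^'n) = mat 1" shows "norm (Q ** (A::real^'m^'n)) = norm A"
proof -
  have "norm (Q ** A) = norm (transpose A ** transpose Q)" using norm_transpose[of "Q ** A"] by (simp add: matrix_transpose_mul)
  also have "\<dots> = norm A" using orth_right[of "transpose Q" "transpose A"] assms norm_transpose[of A] by (simp only: transpose_transpose)
  finally show ?thesis .
qed

lemma norm_orthcols: assumes "transpose W ** (W::real^'n^'m) = mat 1" shows "norm W = sqrt (real CARD('n))"
proof -
  have "norm W ^ 2 = (\<Sum>j\<in>UNIV. (transpose W ** W) $ j $ j)"
    unfolding norm_mat_sq by (simp add: matrix_matrix_mult_def transpose_def power2_eq_square, rule sum.swap)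
  also have "\<dots> = real CARD('n)" using assms by (simp add: mat_def)
  finally show ?thesis by (metis norm_ge_zero real_sqrt_unique)
qed

lemma norm_mat1: "norm (mat 1 :: real^'n^'n) = sqrt (real CARD('n))"
  by (rule norm_orthcols) simp

lemma mm_add_r: "((A::real^'n^'m) + B) ** C = A ** C + B ** C"
  by (simp add: matrix_matrix_mult_def vec_eq_iff sum.distrib[symmetric] algebra_simps)
lemma mm_add_l: "(A::real^'n^'m) ** (B + C) = A ** B + A ** C"
  by (simp add: matrix_matrix_mult_def vec_eq_iff sum.distrib[symmetric] algebra_simps)
lemma mm_scaleR_l: "(c *\<^sub>R (A::real^'n^'m)) ** B = c *\<^sub>R (A ** B)"
  by (simp add: matrix_matrix_mult_def vec_eq_iff sum_distrib_left algebra_simps)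
lemma mm_scaleR_r: "(A::real^'n^'m) ** (c *\<^sub>R B) = c *\<^sub>R (A ** B)"
  by (simp add: matrix_matrix_mult_def vec_eq_iff sum_distrib_left algebra_simps)
lemma mm_diff_r: "((A::real^'n^'m) - B) ** C = A ** C - B ** C"
  by (simp add: matrix_matrix_mult_def vec_eq_iff sum_subtractf[symmetric] algebra_simps)
lemma mm_diff_l: "(A::real^'n^'m) ** (B - C) = A ** B - A ** C"
  by (simp add: matrix_matrix_mult_def vec_eq_iff sum_subtractf[symmetric] algebra_simps)
lemma mm_uminus_l: "(- (A::real^'n^'m)) ** B = - (A ** B)"
  by (simp add: matrix_matrix_mult_def vec_eq_iff sum_negf[symmetric])
lemma mm_uminus_r: "(A::real^'n^'m) ** (- B) = - (A ** B)"
  by (simp add: matrix_matrix_mult_def vec_eq_iff sum_negf[symmetric])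
lemma transpose_add: "transpose ((A::real^'n^'m) + B) = transpose A + transpose B"
  by (simp add: transpose_def vec_eq_iff)
lemma transpose_diff: "transpose ((A::real^'n^'m) - B) = transpose A - transpose B"
  by (simp add: transpose_def vec_eq_iff)
lemma transpose_scaleR: "transpose (c *\<^sub>R (A::real^'n^'m)) = c *\<^sub>R transpose A"
  by (simp add: transpose_def vec_eq_iff)
lemma transpose_uminus: "transpose (- (A::real^'n^'m)) = - transpose A"
  by (simp add: transpose_def vec_eq_iff)
lemma transpose_zero: "transpose (0::real^'n^'m) = 0"
  by (simp add: transpose_def vec_eq_iff)

lemma bounded_bilinear_mm: "bounded_bilinear ((**) :: real^'n^'m \<Rightarrow> real^'k^'n \<Rightarrow> real^'k^'m)"
  apply standard
  apply (simp_all add: mm_add_l mm_add_r mm_scaleR_l mm_scaleR_r)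
  apply (rule exI[of _ 1])
  apply (simp add: norm_mm_le)
  done

lemma bounded_linear_transpose: "bounded_linear (transpose :: real^'n^'m \<Rightarrow> real^'m^'n)"
  by (rule bounded_linear_intro[of _ 1]) (simp_all add: transpose_add transpose_scaleR norm_transpose)

primrec dpow :: "real^'n^'n \<Rightarrow> real^'n^'n \<Rightarrow> nat \<Rightarrow> real^'n^'n" where
  "dpow A H 0 = 0"
| "dpow A H (Suc k) = A ** dpow A H k + H ** mat_pow A k"

lemma mat_pow_deriv: "((\<lambda>A. mat_pow A k) has_derivative (\<lambda>H. dpow A H k)) (at A within S)"
proof (induction k)
  case 0
  then show ?case by simp
next
  case (Suc k)
  have "((\<lambda>A. A ** mat_pow A k) has_derivative (\<lambda>H. A ** dpow A H k + H ** mat_pow A k)) (at A within S)"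
    by (rule bounded_bilinear.FDERIV[OF bounded_bilinear_mm has_derivative_ident Suc])
  then show ?case by simp
qed

lemma norm_mat_pow: "norm (mat_pow A k) \<le> sqrt (real CARD('n)) * norm (A::real^'n^'n) ^ k"
proof (induction k)
  case 0
  then show ?case by (simp add: norm_mat1)
next
  case (Suc k)
  have "norm (mat_pow A (Suc k)) \<le> norm A * norm (mat_pow A k)" by (simp add: norm_mm_le)
  also have "\<dots> \<le> norm A * (sqrt (real CARD('n)) * norm A ^ k)"
    by (rule mult_left_mono[OF Suc]) simp
  finally show ?case by (simp add: algebra_simps)
qed

lemma norm_dpow_Suc:
  assumes "norm (A::real^'n^'n) \<le> r"
  shows "norm (dpow A H (Suc k)) \<le> real (Suc k) * sqrt (real CARD('n)) * r ^ k * norm H"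
proof (induction k)
  case 0
  then show ?case using norm_mm_le[of H "mat 1::real^'n^'n"] by (simp add: norm_mat1 mult.commute)
next
  case (Suc k)
  have r: "0 \<le> r" using assms norm_ge_zero order_trans by blast
  have "norm (dpow A H (Suc (Suc k))) \<le> norm (A ** dpow A H (Suc k)) + norm (H ** mat_pow A (Suc k))"
    unfolding dpow.simps(2)[of A H "Suc k"] by (rule norm_triangle_ineq)
  also have "\<dots> \<le> r * (real (Suc k) * sqrt (real CARD('n)) * r ^ k * norm H) + norm H * (sqrt (real CARD('n)) * r ^ Suc k)"
  proof (rule add_mono)
    show "norm (A ** dpow A H (Suc k)) \<le> r * (real (Suc k) * sqrt (real CARD('n)) * r ^ k * norm H)"
      by (rule order_trans[OF norm_mm_le[of A "dpow A H (Suc k)"] mult_mono[OF assms Suc r norm_ge_zero]])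
    have "norm (mat_pow A (Suc k)) \<le> sqrt (real CARD('n)) * r ^ Suc k"
      using norm_mat_pow[of A "Suc k"] power_mono[OF assms, of "Suc k"]
      by (meson mult_left_mono norm_ge_zero order_trans real_sqrt_ge_zero of_nat_0_le_iff)
    then show "norm (H ** mat_pow A (Suc k)) \<le> norm H * (sqrt (real CARD('n)) * r ^ Suc k)"
      using norm_mm_le[of H "mat_pow A (Suc k)"] by (meson mult_left_mono norm_ge_zero order_trans)
  qed
  also have "\<dots> = real (Suc (Suc k)) * sqrt (real CARD('n)) * r ^ Suc k * norm H"
    by (simp add: algebra_simps)
  finally show ?case .
qed


definition ebnd :: "real \<Rightarrow> real \<Rightarrow> nat \<Rightarrow> real" where
  "ebnd c r k = (case k of 0 \<Rightarrow> 0 | Suc m \<Rightarrow> c * r ^ m / fact m)"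

lemma summable_ebnd: "summable (ebnd c r)"
proof -
  have "summable (\<lambda>m. c * (inverse (fact m) * r ^ m))"
    by (rule summable_mult) (rule summable_exp)
  then have "summable (\<lambda>m. ebnd c r (Suc m))" by (simp add: ebnd_def field_simps)
  then show ?thesis by (simp only: summable_Suc_iff)
qed

lemma exp_dterm_bound:
  assumes "norm (A::real^'n^'n) \<le> r"
  shows "norm ((1 / fact k) *\<^sub>R dpow A H k) \<le> ebnd (sqrt (real CARD('n))) r k * norm H"
proof (cases k)
  case 0
  then show ?thesis by (simp add: ebnd_def)
next
  case (Suc m)
  have "norm ((1 / fact k) *\<^sub>R dpow A H k) = (1 / fact (Suc m)) * norm (dpow A H (Suc m))"
    by (simp add: Suc)
  also have "\<dots> \<le> (1 / fact (Suc m)) * (real (Suc m) * sqrt (real CARD('n)) * r ^ m * norm H)"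
    by (rule mult_left_mono[OF norm_dpow_Suc[OF assms]]) simp
  also have "\<dots> = ((1 / fact (Suc m)) * real (Suc m)) * (sqrt (real CARD('n)) * r ^ m * norm H)"
    by (simp only: mult_ac)
  also have "(1 / fact (Suc m)) * real (Suc m) = 1 / (fact m :: real)"
    by (simp add: fact_Suc del: of_nat_Suc)
  also have "1 / fact m * (sqrt (real CARD('n)) * r ^ m * norm H) = ebnd (sqrt (real CARD('n))) r k * norm H"
    by (simp add: Suc ebnd_def)
  finally show ?thesis .
qed

lemma summable_exp_ser: "summable (\<lambda>k. (1 / fact k) *\<^sub>R mat_pow (A::real^'n^'n) k)"
proof (rule summable_comparison_test')
  show "summable (\<lambda>k. sqrt (real CARD('n)) * (inverse (fact k) * norm A ^ k))"
    by (rule summable_mult) (rule summable_exp)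
  fix k :: nat
  have "norm ((1 / fact k) *\<^sub>R mat_pow A k) = (1 / fact k) * norm (mat_pow A k)" by simp
  also have "\<dots> \<le> (1 / fact k) * (sqrt (real CARD('n)) * norm A ^ k)"
    by (rule mult_left_mono[OF norm_mat_pow]) simp
  finally show "norm ((1 / fact k) *\<^sub>R mat_pow A k) \<le> sqrt (real CARD('n)) * (inverse (fact k) * norm A ^ k)"
    by (simp add: field_simps)
qed

lemma summable_dpow_ser: "summable (\<lambda>k. (1 / fact k) *\<^sub>R dpow (A::real^'n^'n) H k)"
proof (rule summable_comparison_test')
  show "summable (\<lambda>k. ebnd (sqrt (real CARD('n))) (norm A) k * norm H)"
    by (rule summable_mult2) (rule summable_ebnd)
  fix k :: nat
  show "norm ((1 / fact k) *\<^sub>R dpow A H k) \<le> ebnd (sqrt (real CARD('n))) (norm A) k * norm H"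
    by (rule exp_dterm_bound) simp
qed

definition expD :: "real^'n^'n \<Rightarrow> real^'n^'n \<Rightarrow> real^'n^'n" where
  "expD A H = (\<Sum>k. (1 / fact k) *\<^sub>R dpow A H k)"

lemma mat_exp_deriv: "(mat_exp has_derivative expD A) (at (A::real^'n^'n))"
proof -
  define r where "r = norm A + 1"
  define S where "S = ball (0::real^'n^'n) r"
  define c where "c = sqrt (real CARD('n))"
  have AS: "A \<in> S" by (simp add: S_def r_def)
  have unif: "\<forall>\<^sub>F n in sequentially. \<forall>x\<in>S. \<forall>h. norm (sum (\<lambda>i. (1 / fact i) *\<^sub>R dpow x h i) {..<n} - expD x h) \<le> e * norm h"
    if e: "e > 0" for e
  proof -
    obtain N where N: "\<And>n. n \<ge> N \<Longrightarrow> norm (\<Sum>i. ebnd c r (i + n)) < e"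
      using suminf_exist_split[OF e summable_ebnd[of c r]] by blast
    show ?thesis unfolding eventually_sequentially
    proof (intro exI allI impI ballI)
      fix n x h assume n: "N \<le> n" and x: "x \<in> S"
      have xr: "norm x \<le> r" using x by (simp add: S_def)
      have sm: "summable (\<lambda>k. (1 / fact k) *\<^sub>R dpow x h k)" by (rule summable_dpow_ser)
      have "expD x h = (\<Sum>i. (1 / fact (i + n)) *\<^sub>R dpow x h (i + n)) + sum (\<lambda>i. (1 / fact i) *\<^sub>R dpow x h i) {..<n}"
        unfolding expD_def by (rule suminf_split_initial_segment[OF sm])
      then have "norm (sum (\<lambda>i. (1 / fact i) *\<^sub>R dpow x h i) {..<n} - expD x h)
          = norm (\<Sum>i. (1 / fact (i + n)) *\<^sub>R dpow x h (i + n))"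
        by (simp add: norm_minus_commute)
      also have "\<dots> \<le> (\<Sum>i. ebnd c r (i + n) * norm h)"
      proof (rule norm_suminf_le)
        show "norm ((1 / fact (i + n)) *\<^sub>R dpow x h (i + n)) \<le> ebnd c r (i + n) * norm h" for i
          unfolding c_def by (rule exp_dterm_bound[OF xr])
        show "summable (\<lambda>i. ebnd c r (i + n) * norm h)"
          by (rule summable_mult2) (rule summable_ignore_initial_segment[OF summable_ebnd])
      qed
      also have "\<dots> = (\<Sum>i. ebnd c r (i + n)) * norm h"
        by (rule suminf_mult2[symmetric]) (rule summable_ignore_initial_segment[OF summable_ebnd])
      also have "\<dots> \<le> e * norm h"
        using N[OF n] by (intro mult_right_mono) auto
      finally show "norm (sum (\<lambda>i. (1 / fact i) *\<^sub>R dpow x h i) {..<n} - expD x h) \<le> e * norm h" .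
    qed
  qed
  have "\<exists>g. \<forall>x\<in>S. (\<lambda>n. (1 / fact n) *\<^sub>R mat_pow x n) sums g x \<and> (g has_derivative expD x) (at x within S)"
  proof (rule has_derivative_series[where f' = "\<lambda>n x h. (1 / fact n) *\<^sub>R dpow x h n"])
    show "convex S" by (simp add: S_def)
    show "((\<lambda>x. (1 / fact n) *\<^sub>R mat_pow x n) has_derivative (\<lambda>h. (1 / fact n) *\<^sub>R dpow x h n)) (at x within S)" for n x
      by (rule has_derivative_scaleR_right[OF mat_pow_deriv])
    show "\<And>e. 0 < e \<Longrightarrow> \<forall>\<^sub>F n in sequentially. \<forall>x\<in>S. \<forall>h. norm ((\<Sum>i<n. (1 / fact i) *\<^sub>R dpow x h i) - expD x h) \<le> e * norm h"
      using unif by blast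
    show "A \<in> S" by (rule AS)
    show "(\<lambda>n. (1 / fact n) *\<^sub>R mat_pow A n) sums mat_exp A"
      unfolding mat_exp_def by (rule summable_sums[OF summable_exp_ser])
  qed
  then obtain g where g: "\<And>x. x \<in> S \<Longrightarrow> (\<lambda>n. (1 / fact n) *\<^sub>R mat_pow x n) sums g x \<and> (g has_derivative expD x) (at x within S)"
    by blast
  have "(g has_derivative expD A) (at A)"
    using g[OF AS] at_within_open[OF AS] by (simp add: S_def)
  moreover have "g x = mat_exp x" if "x \<in> S" for x
    using g[OF that] unfolding mat_exp_def by (simp add: sums_iff)
  ultimately show ?thesis
    using has_derivative_transform_within_open[of g "expD A" A UNIV S mat_exp] AS by (auto simp: S_def)
qed

lemma mat_pow_scale: "mat_pow (t *\<^sub>R (P::real^'n^'n)) k = t ^ k *\<^sub>R mat_pow P k"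
  by (induction k) (simp_all add: mm_scaleR_l mm_scaleR_r)

lemma dpow_scale: "dpow (t *\<^sub>R (P::real^'n^'n)) P (Suc k) = (real (Suc k) * t ^ k) *\<^sub>R mat_pow P (Suc k)"
proof (induction k)
  case 0
  then show ?case by simp
next
  case (Suc k)
  have "dpow (t *\<^sub>R P) P (Suc (Suc k)) = t *\<^sub>R (P ** dpow (t *\<^sub>R P) P (Suc k)) + P ** mat_pow (t *\<^sub>R P) (Suc k)"
    by (simp only: dpow.simps(2)[of _ _ "Suc k"] mm_scaleR_l)
  also have "\<dots> = (t * (real (Suc k) * t ^ k) + t ^ Suc k) *\<^sub>R mat_pow P (Suc (Suc k))"
    unfolding Suc mat_pow_scale mm_scaleR_r mat_pow.simps(2)[of P "Suc k"] scaleR_scaleR scaleR_add_left ..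
  also have "t * (real (Suc k) * t ^ k) + t ^ Suc k = real (Suc (Suc k)) * t ^ Suc k"
    by (simp add: algebra_simps)
  finally show ?case .
qed

lemma bl_left: "bounded_linear (\<lambda>B. (P::real^'n^'m) ** (B::real^'k^'n))"
  by (rule bounded_bilinear.bounded_linear_right[OF bounded_bilinear_mm])

lemma bl_right: "bounded_linear (\<lambda>B. (B::real^'n^'m) ** (P::real^'k^'n))"
  by (rule bounded_bilinear.bounded_linear_left[OF bounded_bilinear_mm])

lemma expD_scale: "expD (t *\<^sub>R P) P = P ** mat_exp (t *\<^sub>R (P::real^'n^'n))"
proof -
  let ?f = "\<lambda>k. (1 / fact k) *\<^sub>R dpow (t *\<^sub>R P) P k"
  have "expD (t *\<^sub>R P) P = (\<Sum>k. ?f (Suc k))"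
    unfolding expD_def using suminf_split_head[OF summable_dpow_ser[of "t *\<^sub>R P" P]] by simp
  also have "\<dots> = (\<Sum>k. P ** ((1 / fact k) *\<^sub>R mat_pow (t *\<^sub>R P) k))"
  proof (rule suminf_cong)
    fix k
    have "?f (Suc k) = ((1 / fact (Suc k)) * real (Suc k) * t ^ k) *\<^sub>R mat_pow P (Suc k)"
      by (simp only: dpow_scale scaleR_scaleR mult.assoc)
    also have "(1 / fact (Suc k)) * real (Suc k) = 1 / (fact k :: real)"
      by (simp add: fact_Suc del: of_nat_Suc)
    finally show "?f (Suc k) = P ** ((1 / fact k) *\<^sub>R mat_pow (t *\<^sub>R P) k)"
      by (simp add: mat_pow_scale mm_scaleR_r)
  qed
  also have "\<dots> = P ** mat_exp (t *\<^sub>R P)"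
    unfolding mat_exp_def by (rule bounded_linear.suminf[OF bl_left summable_exp_ser, symmetric])
  finally show ?thesis .
qed

lemma U_deriv: "((\<lambda>t. mat_exp (t *\<^sub>R (P::real^'n^'n))) has_derivative (\<lambda>s. s *\<^sub>R (P ** mat_exp (t *\<^sub>R P)))) (at t within S)"
proof -
  have "((\<lambda>t. mat_exp (t *\<^sub>R P)) has_derivative (\<lambda>s. expD (t *\<^sub>R P) (s *\<^sub>R P))) (at t within S)"
    by (rule has_derivative_compose[OF has_derivative_scaleR_left[OF has_derivative_ident] mat_exp_deriv])
  moreover have "expD (t *\<^sub>R P) (s *\<^sub>R P) = s *\<^sub>R (P ** mat_exp (t *\<^sub>R P))" for s
    using linear_scale[OF bounded_linear.linear[OF has_derivative_bounded_linear[OF mat_exp_deriv[of "t *\<^sub>R P"]]]]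
    by (simp add: expD_scale)
  ultimately show ?thesis by simp
qed

lemma mat_exp_zero: "mat_exp (0::real^'n^'n) = mat 1"
proof -
  have "(\<Sum>k. (1 / fact (Suc k)) *\<^sub>R mat_pow (0::real^'n^'n) (Suc k)) = mat_exp 0 - mat 1"
    unfolding mat_exp_def using suminf_split_head[OF summable_exp_ser[of "0::real^'n^'n"]] by simp
  then show ?thesis by simp
qed

lemma skew_orth:
  assumes "transpose P = - (P::real^'n^'n)"
  shows "transpose (mat_exp (t *\<^sub>R P)) ** mat_exp (t *\<^sub>R P) = mat 1"
proof -
  let ?U = "\<lambda>t. mat_exp (t *\<^sub>R P)"
  have d: "((\<lambda>t. transpose (?U t) ** ?U t) has_derivative (\<lambda>h. 0)) (at t within UNIV)" for t
  proof -
    have "((\<lambda>t. transpose (?U t) ** ?U t) has_derivative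
       (\<lambda>h. transpose (?U t) ** (h *\<^sub>R (P ** ?U t)) + transpose (h *\<^sub>R (P ** ?U t)) ** ?U t)) (at t within UNIV)"
      by (rule bounded_bilinear.FDERIV[OF bounded_bilinear_mm bounded_linear.has_derivative[OF bounded_linear_transpose U_deriv] U_deriv])
    moreover have "transpose (?U t) ** (h *\<^sub>R (P ** ?U t)) + transpose (h *\<^sub>R (P ** ?U t)) ** ?U t = 0" for h
      by (simp add: transpose_scaleR matrix_transpose_mul assms mm_scaleR_l mm_scaleR_r mm_uminus_l mm_uminus_r matrix_mul_assoc)
    ultimately show ?thesis by simp
  qed
  obtain c where c: "\<And>x. transpose (?U x) ** ?U x = c"
    using has_derivative_zero_constant[OF convex_UNIV d] by blast
  have "c = mat 1" using c[of 0] by (simp add: mat_exp_zero)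
  then show ?thesis using c by simp
qed

lemma skew_orth2:
  assumes "transpose P = - (P::real^'n^'n)"
  shows "mat_exp (t *\<^sub>R P) ** transpose (mat_exp (t *\<^sub>R P)) = mat 1"
  using skew_orth[OF assms] matrix_left_right_inverse by blast

lemma onorm_scale_const: "onorm (\<lambda>h::real. h *\<^sub>R M) = norm M"
  using onorm_scaleR_left[OF bounded_linear_ident, of M] by (simp add: onorm_id)

lemma exp_skew_lip:
  assumes P: "transpose P = - (P::real^'n^'n)" and P': "transpose P' = - P'"
  shows "norm (mat_exp P - mat_exp P') \<le> norm (P - P')"
proof -
  let ?U = "\<lambda>t. mat_exp (t *\<^sub>R P)"
  let ?V = "\<lambda>t. mat_exp (t *\<^sub>R P')"
  let ?W = "\<lambda>t. transpose (?U t) ** ?V t"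
  let ?D = "\<lambda>t h. h *\<^sub>R (transpose (?U t) ** ((P' - P) ** ?V t))"
  have d: "(?W has_derivative ?D t) (at t within UNIV)" for t
  proof -
    have "(?W has_derivative
       (\<lambda>h. transpose (?U t) ** (h *\<^sub>R (P' ** ?V t)) + transpose (h *\<^sub>R (P ** ?U t)) ** ?V t)) (at t within UNIV)"
      by (rule bounded_bilinear.FDERIV[OF bounded_bilinear_mm bounded_linear.has_derivative[OF bounded_linear_transpose U_deriv] U_deriv])
    moreover have "transpose (?U t) ** (h *\<^sub>R (P' ** ?V t)) + transpose (h *\<^sub>R (P ** ?U t)) ** ?V t = ?D t h" for h
      by (simp add: transpose_scaleR matrix_transpose_mul P mm_scaleR_l mm_scaleR_r mm_uminus_l mm_uminus_r
          matrix_mul_assoc mm_diff_l mm_diff_r algebra_simps)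
    ultimately show ?thesis by simp
  qed
  have b: "onorm (?D t) \<le> norm (P - P')" for t
  proof -
    have o1: "transpose (transpose (?U t)) ** transpose (?U t) = mat 1" using skew_orth2[OF P] by simp
    have "onorm (?D t) = norm (transpose (?U t) ** ((P' - P) ** ?V t))" by (rule onorm_scale_const)
    also have "\<dots> = norm ((P' - P) ** ?V t)" by (rule orth_left[OF o1])
    also have "\<dots> = norm (P' - P)" by (rule orth_right[OF skew_orth2[OF P']])
    finally show ?thesis by (simp add: norm_minus_commute)
  qed
  have "norm (?W 1 - ?W 0) \<le> norm (P - P') * norm (1 - 0::real)"
    by (rule differentiable_bound[OF convex_UNIV d b]) auto
  then have w: "norm (transpose (mat_exp P) ** mat_exp P' - mat 1) \<le> norm (P - P')"
    by (simp add: mat_exp_zero)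
  have "mat_exp P' - mat_exp P = mat_exp P ** (transpose (mat_exp P) ** mat_exp P' - mat 1)"
    using skew_orth2[OF P, of 1] by (simp add: mm_diff_l matrix_mul_assoc)
  then have "norm (mat_exp P' - mat_exp P) = norm (transpose (mat_exp P) ** mat_exp P' - mat 1)"
    using orth_left[OF skew_orth[OF P, of 1]] by simp
  then show ?thesis using w by (simp add: norm_minus_commute)
qed

definition lipb :: "('a::real_normed_vector \<Rightarrow> 'b::real_normed_vector) \<Rightarrow> 'a set \<Rightarrow> real \<Rightarrow> real \<Rightarrow> bool" where
  "lipb f S L b \<longleftrightarrow> (\<forall>x\<in>S. \<forall>y\<in>S. norm (f x - f y) \<le> L * norm (x - y)) \<and> (\<forall>x\<in>S. norm (f x) \<le> b)"

lemma lipbD: "lipb f S L b \<Longrightarrow> x \<in> S \<Longrightarrow> y \<in> S \<Longrightarrow> norm (f x - f y) \<le> L * norm (x - y)"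
  and lipbB: "lipb f S L b \<Longrightarrow> x \<in> S \<Longrightarrow> norm (f x) \<le> b"
  unfolding lipb_def by auto

lemma lipb_mono: "lipb f S L b \<Longrightarrow> L \<le> L' \<Longrightarrow> b \<le> b' \<Longrightarrow> lipb f S L' b'"
  unfolding lipb_def by (meson mult_right_mono norm_ge_zero order_trans)

lemma lipb_const: "lipb (\<lambda>_. c) S 0 (norm c)"
  unfolding lipb_def by simp

lemma lipb_id: "lipb (\<lambda>x. x) (cball 0 r) 1 r"
  unfolding lipb_def by simp

lemma lipb_add: "lipb f S L1 b1 \<Longrightarrow> lipb g S L2 b2 \<Longrightarrow> lipb (\<lambda>x. f x + g x) S (L1 + L2) (b1 + b2)"
  unfolding lipb_def
proof (intro conjI ballI; elim conjE)
  fix x y assume f: "\<forall>x\<in>S. \<forall>y\<in>S. norm (f x - f y) \<le> L1 * norm (x - y)" and g: "\<forall>x\<in>S. \<forall>y\<in>S. norm (g x - g y) \<le> L2 * norm (x - y)"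
    and x: "x \<in> S" and y: "y \<in> S"
  have "norm (f x + g x - (f y + g y)) \<le> norm (f x - f y) + norm (g x - g y)"
    by (metis add_diff_add norm_triangle_ineq)
  also have "\<dots> \<le> (L1 + L2) * norm (x - y)" using f g x y by (simp add: distrib_right add_mono)
  finally show "norm (f x + g x - (f y + g y)) \<le> (L1 + L2) * norm (x - y)" .
next
  fix x assume "\<forall>x\<in>S. norm (f x) \<le> b1" "\<forall>x\<in>S. norm (g x) \<le> b2" "x \<in> S"
  then show "norm (f x + g x) \<le> b1 + b2" by (meson add_mono norm_triangle_ineq order_trans)
qed

lemma lipb_scale: assumes f: "lipb f S L b" shows "lipb (\<lambda>x. c *\<^sub>R f x) S (\<bar>c\<bar> * L) (\<bar>c\<bar> * b)"
  unfolding lipb_def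
proof (intro conjI ballI)
  fix x y assume x: "x \<in> S" and y: "y \<in> S"
  have "norm (c *\<^sub>R f x - c *\<^sub>R f y) = \<bar>c\<bar> * norm (f x - f y)"
    by (simp add: scaleR_diff_right[symmetric])
  also have "\<dots> \<le> \<bar>c\<bar> * (L * norm (x - y))" by (rule mult_left_mono[OF lipbD[OF f x y]]) simp
  finally show "norm (c *\<^sub>R f x - c *\<^sub>R f y) \<le> \<bar>c\<bar> * L * norm (x - y)" by (simp add: mult.assoc)
next
  fix x assume x: "x \<in> S"
  show "norm (c *\<^sub>R f x) \<le> \<bar>c\<bar> * b" using mult_left_mono[OF lipbB[OF f x], of "\<bar>c\<bar>"] by simp
qed

lemma lipb_uminus: "lipb f S L b \<Longrightarrow> lipb (\<lambda>x. - f x) S L b"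
  unfolding lipb_def by (metis minus_diff_minus norm_minus_cancel)

lemma lipb_diff: "lipb f S L1 b1 \<Longrightarrow> lipb g S L2 b2 \<Longrightarrow> lipb (\<lambda>x. f x - g x) S (L1 + L2) (b1 + b2)"
  using lipb_add[of f S L1 b1 "\<lambda>x. - g x" L2 b2] lipb_uminus[of g S L2 b2] by simp

lemma lipb_comp: assumes f: "lipb f S L1 b1" and T: "\<And>x. x \<in> S \<Longrightarrow> f x \<in> T" and g: "lipb g T L2 b2"
  and L2: "0 \<le> L2"
  shows "lipb (\<lambda>x. g (f x)) S (L2 * L1) b2"
  unfolding lipb_def
proof (intro conjI ballI)
  fix x y assume x: "x \<in> S" and y: "y \<in> S"
  have "norm (g (f x) - g (f y)) \<le> L2 * norm (f x - f y)" by (rule lipbD[OF g T[OF x] T[OF y]])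
  also have "\<dots> \<le> L2 * (L1 * norm (x - y))" by (rule mult_left_mono[OF lipbD[OF f x y] L2])
  finally show "norm (g (f x) - g (f y)) \<le> L2 * L1 * norm (x - y)" by (simp add: mult.assoc)
next
  fix x assume x: "x \<in> S"
  show "norm (g (f x)) \<le> b2" by (rule lipbB[OF g T[OF x]])
qed

lemma lipb_transpose: "lipb f S L b \<Longrightarrow> lipb (\<lambda>x. transpose (f x :: real^'n^'m)) S L b"
  unfolding lipb_def by (simp add: transpose_diff[symmetric] norm_transpose)

lemma lipb_mm:
  assumes f: "lipb f S L1 b1" and g: "lipb g S L2 b2"
  shows "lipb (\<lambda>x. (f x :: real^'n^'m) ** (g x :: real^'k^'n)) S (L1 * b2 + b1 * L2) (b1 * b2)"
  unfolding lipb_def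
proof (intro conjI ballI)
  fix x y assume x: "x \<in> S" and y: "y \<in> S"
  have fx: "norm (f x - f y) \<le> L1 * norm (x - y)" and gx: "norm (g x - g y) \<le> L2 * norm (x - y)"
    using lipbD[OF f x y] lipbD[OF g x y] .
  have bg: "norm (g x) \<le> b2" and bf: "norm (f y) \<le> b1" using lipbB[OF g x] lipbB[OF f y] .
  have "f x ** g x - f y ** g y = (f x - f y) ** g x + f y ** (g x - g y)"
    by (simp add: mm_diff_l mm_diff_r)
  then have "norm (f x ** g x - f y ** g y) \<le> norm ((f x - f y) ** g x) + norm (f y ** (g x - g y))"
    by (simp add: norm_triangle_ineq)
  also have "\<dots> \<le> norm (f x - f y) * norm (g x) + norm (f y) * norm (g x - g y)"
    by (intro add_mono norm_mm_le)
  also have "\<dots> \<le> (L1 * norm (x - y)) * b2 + b1 * (L2 * norm (x - y))"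
    using order_trans[OF norm_ge_zero fx] order_trans[OF norm_ge_zero bf]
    by (intro add_mono mult_mono fx gx bg bf) auto
  also have "\<dots> = (L1 * b2 + b1 * L2) * norm (x - y)" by (simp add: algebra_simps)
  finally show "norm (f x ** g x - f y ** g y) \<le> (L1 * b2 + b1 * L2) * norm (x - y)" .
next
  fix x assume x: "x \<in> S"
  have "norm (f x ** g x) \<le> norm (f x) * norm (g x)" by (rule norm_mm_le)
  also have "\<dots> \<le> b1 * b2" using lipbB[OF f x] lipbB[OF g x]
    by (intro mult_mono) (auto intro: order_trans[OF norm_ge_zero])
  finally show "norm (f x ** g x) \<le> b1 * b2" .
qed

lemma lipb_exp:
  assumes F: "lipb F S L b" and sk: "\<And>x. x \<in> S \<Longrightarrow> transpose (F x) = - (F x :: real^'n^'n)"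
  shows "lipb (\<lambda>x. mat_exp (F x) - mat 1) S L b"
  unfolding lipb_def
proof (intro conjI ballI)
  fix x y assume x: "x \<in> S" and y: "y \<in> S"
  have "norm (mat_exp (F x) - mat 1 - (mat_exp (F y) - mat 1)) = norm (mat_exp (F x) - mat_exp (F y))" by simp
  also have "\<dots> \<le> norm (F x - F y)" by (rule exp_skew_lip[OF sk[OF x] sk[OF y]])
  also have "\<dots> \<le> L * norm (x - y)" by (rule lipbD[OF F x y])
  finally show "norm (mat_exp (F x) - mat 1 - (mat_exp (F y) - mat 1)) \<le> L * norm (x - y)" .
next
  fix x assume x: "x \<in> S"
  have "norm (mat_exp (F x) - mat 1) = norm (mat_exp (F x) - mat_exp 0)" by (simp add: mat_exp_zero)
  also have "\<dots> \<le> norm (F x - 0)" by (rule exp_skew_lip[OF sk[OF x]]) (simp add: transpose_zero)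
  also have "\<dots> \<le> b" using lipbB[OF F x] by simp
  finally show "norm (mat_exp (F x) - mat 1) \<le> b" .
qed

lemma lipb_normalize:
  assumes e: "(\<epsilon>::real) > 0"
  shows "lipb (\<lambda>M::'a::real_normed_vector. (1 / (norm M + \<epsilon>)) *\<^sub>R M) UNIV (2 / \<epsilon>) 1"
  unfolding lipb_def
proof (intro conjI ballI)
  fix a b :: 'a
  have pa: "norm a + \<epsilon> > 0" and pb: "norm b + \<epsilon> > 0" using e by (simp_all add: add_nonneg_pos)
  have eq: "(1 / (norm a + \<epsilon>)) *\<^sub>R a - (1 / (norm b + \<epsilon>)) *\<^sub>R b
      = (1 / (norm a + \<epsilon>)) *\<^sub>R (a - b) + ((norm b - norm a) / ((norm a + \<epsilon>) * (norm b + \<epsilon>))) *\<^sub>R b"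
  proof -
    have "1 / (norm a + \<epsilon>) - 1 / (norm b + \<epsilon>) = (norm b - norm a) / ((norm a + \<epsilon>) * (norm b + \<epsilon>))"
      using pa pb by (simp add: field_simps)
    moreover have "(1 / (norm a + \<epsilon>)) *\<^sub>R a - (1 / (norm b + \<epsilon>)) *\<^sub>R b
       = (1 / (norm a + \<epsilon>)) *\<^sub>R (a - b) + (1 / (norm a + \<epsilon>) - 1 / (norm b + \<epsilon>)) *\<^sub>R b"
      by (simp add: scaleR_diff_right scaleR_diff_left)
    ultimately show ?thesis by simp
  qed
  have "norm ((1 / (norm a + \<epsilon>)) *\<^sub>R a - (1 / (norm b + \<epsilon>)) *\<^sub>R b)
      \<le> norm ((1 / (norm a + \<epsilon>)) *\<^sub>R (a - b)) + norm (((norm b - norm a) / ((norm a + \<epsilon>) * (norm b + \<epsilon>))) *\<^sub>R b)"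
    unfolding eq by (rule norm_triangle_ineq)
  also have "\<dots> = norm (a - b) / (norm a + \<epsilon>) + \<bar>norm b - norm a\<bar> / ((norm a + \<epsilon>) * (norm b + \<epsilon>)) * norm b"
    using pa pb by (simp add: abs_mult abs_divide)
  also have "\<dots> \<le> norm (a - b) / \<epsilon> + norm (a - b) / \<epsilon>"
  proof (rule add_mono)
    show "norm (a - b) / (norm a + \<epsilon>) \<le> norm (a - b) / \<epsilon>"
      using e pa by (intro divide_left_mono) auto
    have "\<bar>norm b - norm a\<bar> \<le> norm (a - b)" by (metis norm_triangle_ineq3 abs_minus_commute norm_minus_commute)
    have "\<bar>norm b - norm a\<bar> / ((norm a + \<epsilon>) * (norm b + \<epsilon>)) * norm b
        = (\<bar>norm b - norm a\<bar> / (norm a + \<epsilon>)) * (norm b / (norm b + \<epsilon>))" by simp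
    also have "\<dots> \<le> (norm (a - b) / \<epsilon>) * 1"
    proof (rule mult_mono)
      show "\<bar>norm b - norm a\<bar> / (norm a + \<epsilon>) \<le> norm (a - b) / \<epsilon>"
        using \<open>\<bar>norm b - norm a\<bar> \<le> norm (a - b)\<close> e pa
        by (meson frac_le abs_ge_zero le_add_same_cancel2 norm_ge_zero order_trans)
      show "norm b / (norm b + \<epsilon>) \<le> 1" using pb e by simp
    qed (use e in auto)
    finally show "\<bar>norm b - norm a\<bar> / ((norm a + \<epsilon>) * (norm b + \<epsilon>)) * norm b \<le> norm (a - b) / \<epsilon>" by simp
  qed
  also have "\<dots> = 2 / \<epsilon> * norm (a - b)" by simp
  finally show "norm ((1 / (norm a + \<epsilon>)) *\<^sub>R a - (1 / (norm b + \<epsilon>)) *\<^sub>R b) \<le> 2 / \<epsilon> * norm (a - b)" .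
next
  fix a :: 'a
  have p: "0 < \<epsilon> + norm a" using e by (simp add: add_pos_nonneg)
  show "norm ((1 / (norm a + \<epsilon>)) *\<^sub>R a) \<le> 1" using e p by (simp add: divide_le_eq add.commute)
qed

lemma ns_step_eq: "ns_step (M::real^'n^'m) = (3/2) *\<^sub>R M - (1/2) *\<^sub>R (M ** (transpose M ** M))"
  unfolding ns_step_def by (simp add: mm_diff_l mm_scaleR_r scaleR_diff_right)

lemma lipb_ns:
  assumes b: "0 \<le> b"
  shows "lipb (ns_step :: real^'n^'m \<Rightarrow> _) (cball 0 b) (3/2 + 3 * b^2 / 2) (3 * b / 2 + b^3 / 2)"
proof -
  let ?D = "cball (0::real^'n^'m) b"
  have i: "lipb (\<lambda>x::real^'n^'m. x) ?D 1 b" by (rule lipb_id)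
  have t: "lipb (\<lambda>x::real^'n^'m. transpose x) ?D 1 b" by (rule lipb_transpose[OF i])
  have p1: "lipb (\<lambda>x::real^'n^'m. transpose x ** x) ?D (1 * b + b * 1) (b * b)" by (rule lipb_mm[OF t i])
  have p2: "lipb (\<lambda>x::real^'n^'m. x ** (transpose x ** x)) ?D (1 * (b * b) + b * (1 * b + b * 1)) (b * (b * b))"
    by (rule lipb_mm[OF i p1])
  have "lipb (\<lambda>x::real^'n^'m. (3/2) *\<^sub>R x - (1/2) *\<^sub>R (x ** (transpose x ** x))) ?D
      (\<bar>3/2\<bar> * 1 + \<bar>1/2\<bar> * (1 * (b * b) + b * (1 * b + b * 1))) (\<bar>3/2\<bar> * b + \<bar>1/2\<bar> * (b * (b * b)))"
    by (rule lipb_diff[OF lipb_scale[OF i] lipb_scale[OF p2]])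
  then have "lipb (\<lambda>x::real^'n^'m. (3/2) *\<^sub>R x - (1/2) *\<^sub>R (x ** (transpose x ** x))) ?D
      (3/2 + 3 * b^2 / 2) (3 * b / 2 + b^3 / 2)"
    by (rule lipb_mono) (simp_all add: power2_eq_square power3_eq_cube algebra_simps)
  moreover have "(\<lambda>x::real^'n^'m. (3/2) *\<^sub>R x - (1/2) *\<^sub>R (x ** (transpose x ** x))) = ns_step"
    by (rule ext) (simp add: ns_step_eq)
  ultimately show ?thesis by simp
qed

primrec nb :: "nat \<Rightarrow> real" where
  "nb 0 = 1"
| "nb (Suc k) = 3 * nb k / 2 + nb k ^ 3 / 2"

primrec nl :: "nat \<Rightarrow> real" where
  "nl 0 = 1"
| "nl (Suc k) = (3/2 + 3 * nb k ^ 2 / 2) * nl k"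

lemma nb_ge1: "nb k \<ge> 1"
proof (induction k)
  case (Suc k)
  have "nb k ^ 3 \<ge> 1" using Suc by simp
  then show ?case using Suc by (simp only: nb.simps)
qed simp

lemma nl_ge0: "nl k \<ge> 0"
  by (induction k) (simp_all add: add_nonneg_nonneg)

lemma lipb_ns_iter: "lipb (\<lambda>M. (ns_step ^^ k) M) (cball (0::real^'n^'m) 1) (nl k) (nb k)"
proof (induction k)
  case 0
  then show ?case using lipb_id[of 1] by simp
next
  case (Suc k)
  have "lipb (\<lambda>M. ns_step ((ns_step ^^ k) M)) (cball (0::real^'n^'m) 1) ((3/2 + 3 * nb k ^ 2 / 2) * nl k) (3 * nb k / 2 + nb k ^ 3 / 2)"
  proof (rule lipb_comp[OF Suc])
    show "(ns_step ^^ k) x \<in> cball 0 (nb k)" if "x \<in> cball (0::real^'n^'m) 1" for x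
      using lipbB[OF Suc that] by simp
    show "lipb ns_step (cball (0::real^'n^'m) (nb k)) (3/2 + 3 * nb k ^ 2 / 2) (3 * nb k / 2 + nb k ^ 3 / 2)"
      by (rule lipb_ns) (use nb_ge1[of k] in simp)
    show "0 \<le> 3/2 + 3 * nb k ^ 2 / 2" by (simp add: add_nonneg_nonneg)
  qed
  then show ?case by simp
qed

lemma hcat_orth:
  assumes "transpose (hcat A B) ** hcat A B = (mat 1 :: real^('b+'c)^('b+'c))"
  shows "transpose A ** (A::real^'b^'m) = mat 1" and "transpose B ** (B::real^'c^'m) = mat 1"
proof -
  have e: "(transpose (hcat A B) ** hcat A B) $ p $ q = (mat 1 :: real^('b+'c)^('b+'c)) $ p $ q" for p q
    using assms by simp
  show "transpose A ** A = mat 1"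
    using e[of "Inl _" "Inl _"] by (simp add: vec_eq_iff matrix_matrix_mult_def transpose_def hcat_def mat_def)
  show "transpose B ** B = mat 1"
    using e[of "Inr _" "Inr _"] by (simp add: vec_eq_iff matrix_matrix_mult_def transpose_def hcat_def mat_def)
qed

definition cA :: "real \<Rightarrow> nat \<Rightarrow> real \<Rightarrow> real \<Rightarrow> real \<Rightarrow> real" where
  "cA \<epsilon> K \<rho> q h =
    (let b = nb K; lB = nl K * (2 / \<epsilon> * h); lS = 4 * \<rho> * q; bS = 2 * \<rho>^2 * q;
         lSb = (lB * bS + b * lS) * b + b * bS * lB; bSb = b * bS * b
     in (lB * bSb + b * lSb) * b + b * bSb * lB)"

lemma cA_nonneg: "\<epsilon> > 0 \<Longrightarrow> \<rho> \<ge> 0 \<Longrightarrow> q \<ge> 0 \<Longrightarrow> h \<ge> 0 \<Longrightarrow> cA \<epsilon> K \<rho> q h \<ge> 0"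
  unfolding cA_def Let_def using nb_ge1[of K] nl_ge0[of K] by simp

lemma A_lip:
  fixes WQ WK :: "real^'v^'d" and \<epsilon> \<alpha> \<rho> :: real
  assumes HH: "transpose (hcat WQ WK) ** hcat WQ WK = mat 1"
    and e: "\<epsilon> > 0" and a: "\<alpha> > 0" and r: "\<rho> \<ge> 0"
  shows "\<exists>Bd. lipb (OSA_A \<epsilon> K \<alpha> WQ WK :: real^'d^'N \<Rightarrow> _) (cball 0 \<rho>)
           (\<alpha> * cA \<epsilon> K \<rho> (sqrt (real CARD('v))) (sqrt (real CARD('v + 'v)))) Bd"
proof -
  define H where "H = hcat WQ WK"
  define q where "q = sqrt (real CARD('v))"
  define h where "h = sqrt (real CARD('v + 'v))"
  define D where "D = cball (0::real^'d^'N) \<rho>"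
  define b where "b = nb K"
  define lB where "lB = nl K * (2 / \<epsilon> * h)"
  define lS where "lS = 4 * \<rho> * q"
  define bS where "bS = 2 * \<rho>^2 * q"
  define lSb where "lSb = (lB * bS + b * lS) * b + b * bS * lB"
  define bSb where "bSb = b * bS * b"
  have cA: "cA \<epsilon> K \<rho> q h = (lB * bSb + b * lSb) * b + b * bSb * lB"
    unfolding cA_def Let_def lSb_def bSb_def lS_def bS_def lB_def b_def ..
  have q: "q > 0" unfolding q_def by simp
  have h: "h \<ge> 0" unfolding h_def by simp
  have b0: "b \<ge> 1" unfolding b_def by (rule nb_ge1)
  have lB0: "lB \<ge> 0" unfolding lB_def using nl_ge0[of K] e h by simp
  have nH: "norm H = h" unfolding H_def h_def by (rule norm_orthcols[OF HH])
  have nQ: "norm WQ = q" unfolding q_def by (rule norm_orthcols[OF hcat_orth(1)[OF HH]])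
  have nK: "norm WK = q" unfolding q_def by (rule norm_orthcols[OF hcat_orth(2)[OF HH]])
  have i: "lipb (\<lambda>Y::real^'d^'N. Y) D 1 \<rho>" unfolding D_def by (rule lipb_id)
  have m1: "lipb (\<lambda>Y::real^'d^'N. Y ** H) D (1 * h + \<rho> * 0) (\<rho> * h)"
    using lipb_mm[OF i lipb_const[of H D]] nH by simp
  have m2: "lipb (\<lambda>Y::real^'d^'N. (1 / (norm (Y ** H) + \<epsilon>)) *\<^sub>R (Y ** H)) D (2 / \<epsilon> * (1 * h + \<rho> * 0)) 1"
    by (rule lipb_comp[OF m1 _ lipb_normalize[OF e]]) (use e in auto)
  have m3: "lipb (\<lambda>Y::real^'d^'N. (ns_step ^^ K) ((1 / (norm (Y ** H) + \<epsilon>)) *\<^sub>R (Y ** H))) D (nl K * (2 / \<epsilon> * (1 * h + \<rho> * 0))) (nb K)"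
    by (rule lipb_comp[OF m2 _ lipb_ns_iter nl_ge0]) (use lipbB[OF m2] in auto)
  have B: "lipb (\<lambda>Y::real^'d^'N. OSA_B \<epsilon> K H Y) D lB b"
    using m3 unfolding OSA_B_def Let_def frob_norm_eq lB_def b_def by simp
  have Q: "lipb (\<lambda>Y::real^'d^'N. Y ** WQ) D q (\<rho> * q)"
    using lipb_mm[OF i lipb_const[of WQ D]] nQ by simp
  have Kk: "lipb (\<lambda>Y::real^'d^'N. Y ** WK) D q (\<rho> * q)"
    using lipb_mm[OF i lipb_const[of WK D]] nK by simp
  have S0: "lipb (\<lambda>Y::real^'d^'N. (\<alpha> / q) *\<^sub>R ((Y ** WQ) ** transpose (Y ** WK) - (Y ** WK) ** transpose (Y ** WQ))) D
     (\<bar>\<alpha> / q\<bar> * ((q * (\<rho> * q) + \<rho> * q * q) + (q * (\<rho> * q) + \<rho> * q * q))) (\<bar>\<alpha> / q\<bar> * (\<rho> * q * (\<rho> * q) + \<rho> * q * (\<rho> * q)))"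
    by (rule lipb_scale[OF lipb_diff[OF lipb_mm[OF Q lipb_transpose[OF Kk]] lipb_mm[OF Kk lipb_transpose[OF Q]]]])
  have S: "lipb (\<lambda>Y::real^'d^'N. (\<alpha> / q) *\<^sub>R ((Y ** WQ) ** transpose (Y ** WK) - (Y ** WK) ** transpose (Y ** WQ))) D
     (\<alpha> * lS) (\<alpha> * bS)"
    by (rule lipb_mono[OF S0]) (use q a in \<open>simp_all add: lS_def bS_def abs_of_pos power2_eq_square field_simps\<close>)
  have Sb0: "lipb (\<lambda>Y::real^'d^'N. transpose (OSA_B \<epsilon> K H Y) ** ((\<alpha> / q) *\<^sub>R ((Y ** WQ) ** transpose (Y ** WK) - (Y ** WK) ** transpose (Y ** WQ))) ** OSA_B \<epsilon> K H Y) D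
      ((lB * (\<alpha> * bS) + b * (\<alpha> * lS)) * b + b * (\<alpha> * bS) * lB) (b * (\<alpha> * bS) * b)"
    by (rule lipb_mm[OF lipb_mm[OF lipb_transpose[OF B] S] B])
  have Sb: "lipb (\<lambda>Y::real^'d^'N. transpose (OSA_B \<epsilon> K H Y) ** ((\<alpha> / q) *\<^sub>R ((Y ** WQ) ** transpose (Y ** WK) - (Y ** WK) ** transpose (Y ** WQ))) ** OSA_B \<epsilon> K H Y) D
      (\<alpha> * lSb) (\<alpha> * bSb)"
    by (rule lipb_mono[OF Sb0]) (simp_all add: lSb_def bSb_def algebra_simps)
  have skew: "transpose (transpose B' ** ((\<alpha> / q) *\<^sub>R (P ** transpose R - R ** transpose P)) ** B')
      = - (transpose B' ** ((\<alpha> / q) *\<^sub>R (P ** transpose R - R ** transpose P)) ** B')"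
    for B' :: "real^('v+'v)^'N" and P R :: "real^'v^'N"
    by (simp add: matrix_transpose_mul transpose_scaleR transpose_diff matrix_mul_assoc mm_scaleR_l mm_scaleR_r
        mm_diff_l mm_diff_r mm_uminus_l mm_uminus_r algebra_simps)
  have E: "lipb (\<lambda>Y::real^'d^'N. mat_exp (transpose (OSA_B \<epsilon> K H Y) ** ((\<alpha> / q) *\<^sub>R ((Y ** WQ) ** transpose (Y ** WK) - (Y ** WK) ** transpose (Y ** WQ))) ** OSA_B \<epsilon> K H Y) - mat 1) D
      (\<alpha> * lSb) (\<alpha> * bSb)"
    by (rule lipb_exp[OF Sb skew])
  have A0: "lipb (\<lambda>Y::real^'d^'N. mat 1 + OSA_B \<epsilon> K H Y ** (mat_exp (transpose (OSA_B \<epsilon> K H Y) ** ((\<alpha> / q) *\<^sub>R ((Y ** WQ) ** transpose (Y ** WK) - (Y ** WK) ** transpose (Y ** WQ))) ** OSA_B \<epsilon> K H Y) - mat 1) ** transpose (OSA_B \<epsilon> K H Y)) D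
      (0 + ((lB * (\<alpha> * bSb) + b * (\<alpha> * lSb)) * b + b * (\<alpha> * bSb) * lB)) (norm (mat 1 :: real^'N^'N) + b * (\<alpha> * bSb) * b)"
    by (rule lipb_add[OF lipb_const lipb_mm[OF lipb_mm[OF B E] lipb_transpose[OF B]]])
  have A1: "lipb (\<lambda>Y::real^'d^'N. mat 1 + OSA_B \<epsilon> K H Y ** (mat_exp (transpose (OSA_B \<epsilon> K H Y) ** ((\<alpha> / q) *\<^sub>R ((Y ** WQ) ** transpose (Y ** WK) - (Y ** WK) ** transpose (Y ** WQ))) ** OSA_B \<epsilon> K H Y) - mat 1) ** transpose (OSA_B \<epsilon> K H Y)) D
      (\<alpha> * cA \<epsilon> K \<rho> q h) (norm (mat 1 :: real^'N^'N) + b * (\<alpha> * bSb) * b)"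
  proof (rule lipb_mono[OF A0])
    show "0 + ((lB * (\<alpha> * bSb) + b * (\<alpha> * lSb)) * b + b * (\<alpha> * bSb) * lB) \<le> \<alpha> * cA \<epsilon> K \<rho> q h"
      unfolding cA by (simp add: algebra_simps)
    show "norm (mat 1 :: real^'N^'N) + b * (\<alpha> * bSb) * b \<le> norm (mat 1 :: real^'N^'N) + b * (\<alpha> * bSb) * b" by simp
  qed
  have eqA: "OSA_A \<epsilon> K \<alpha> WQ WK = (\<lambda>Y::real^'d^'N. mat 1 + OSA_B \<epsilon> K H Y ** (mat_exp (transpose (OSA_B \<epsilon> K H Y) ** ((\<alpha> / q) *\<^sub>R ((Y ** WQ) ** transpose (Y ** WK) - (Y ** WK) ** transpose (Y ** WQ))) ** OSA_B \<epsilon> K H Y) - mat 1) ** transpose (OSA_B \<epsilon> K H Y))"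
    unfolding OSA_A_def Let_def H_def q_def by (rule ext) simp
  show ?thesis using A1 unfolding eqA D_def q_def h_def by blast
qed

lemma diff_mm: "f differentiable (at x within s) \<Longrightarrow> g differentiable (at x within s) \<Longrightarrow>
   (\<lambda>x. (f x :: real^'n^'m) ** (g x :: real^'k^'n)) differentiable (at x within s)"
  unfolding differentiable_def using bounded_bilinear.FDERIV[OF bounded_bilinear_mm] by blast

lemma diff_transpose: "f differentiable F \<Longrightarrow> (\<lambda>x. transpose (f x :: real^'n^'m)) differentiable F"
  unfolding differentiable_def using bounded_linear.has_derivative[OF bounded_linear_transpose] by blast

lemma diff_ns_iter: "g differentiable (at x within s) \<Longrightarrow> (\<lambda>x. (ns_step ^^ k) (g x :: real^'n^'m)) differentiable (at x within s)"
proof (induction k)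
  case 0
  then show ?case by simp
next
  case (Suc k)
  let ?f = "\<lambda>x. (ns_step ^^ k) (g x)"
  have a: "?f differentiable (at x within s)" by (rule Suc.IH[OF Suc.prems])
  have b: "(\<lambda>x. ?f x ** (transpose (?f x) ** ?f x)) differentiable (at x within s)"
    by (intro diff_mm diff_transpose a)
  have "(\<lambda>x. (3/2) *\<^sub>R ?f x - (1/2) *\<^sub>R (?f x ** (transpose (?f x) ** ?f x))) differentiable (at x within s)"
    by (rule differentiable_diff[OF differentiable_scaleR[OF differentiable_const a] differentiable_scaleR[OF differentiable_const b]])
  moreover have "(\<lambda>x. (ns_step ^^ Suc k) (g x)) = (\<lambda>x. (3/2) *\<^sub>R ?f x - (1/2) *\<^sub>R (?f x ** (transpose (?f x) ** ?f x)))"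
    apply (rule ext)
    apply (subst funpow.simps(2))
    apply (subst comp_apply)
    apply (rule ns_step_eq)
    done
  ultimately show ?case by simp
qed

lemma hcat_mm: "hcat (X ** A) (X ** B) = X ** hcat A B"
  by (simp add: hcat_def matrix_matrix_mult_def vec_eq_iff split: sum.split)

lemma A_diff:
  fixes WQ WK :: "real^'v^'d" and X :: "real^'d^'N"
  assumes nz: "X ** hcat WQ WK \<noteq> 0" and e: "\<epsilon> > 0"
  shows "OSA_A \<epsilon> K \<alpha> WQ WK differentiable (at X)"
proof -
  define H where "H = hcat WQ WK"
  define q where "q = sqrt (real CARD('v))"
  have eqA: "OSA_A \<epsilon> K \<alpha> WQ WK = (\<lambda>Y::real^'d^'N. mat 1 + OSA_B \<epsilon> K H Y ** (mat_exp (transpose (OSA_B \<epsilon> K H Y) ** ((\<alpha> / q) *\<^sub>R ((Y ** WQ) ** transpose (Y ** WK) - (Y ** WK) ** transpose (Y ** WQ))) ** OSA_B \<epsilon> K H Y) - mat 1) ** transpose (OSA_B \<epsilon> K H Y))"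
    unfolding OSA_A_def Let_def H_def q_def by (rule ext) simp
  have id: "(\<lambda>Y::real^'d^'N. Y) differentiable (at X)" by simp
  have d1: "(\<lambda>Y::real^'d^'N. Y ** H) differentiable (at X)" by (rule diff_mm[OF id differentiable_const])
  have d2: "(\<lambda>Y::real^'d^'N. norm (Y ** H)) differentiable (at X)"
    using differentiable_chain_at[OF d1 differentiable_norm_at] nz by (simp add: o_def H_def)
  have pos: "norm (X ** H) + \<epsilon> \<noteq> 0" using e norm_ge_zero[of "X ** H"] by linarith
  have d3: "(\<lambda>Y::real^'d^'N. 1 / (norm (Y ** H) + \<epsilon>)) differentiable (at X)"
    by (rule differentiable_divide) (use d2 pos in auto)
  have dB: "(\<lambda>Y::real^'d^'N. OSA_B \<epsilon> K H Y) differentiable (at X)"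
    unfolding OSA_B_def Let_def frob_norm_eq
    by (rule diff_ns_iter) (rule differentiable_scaleR[OF d3 d1])
  have dS: "(\<lambda>Y::real^'d^'N. transpose (OSA_B \<epsilon> K H Y) ** ((\<alpha> / q) *\<^sub>R ((Y ** WQ) ** transpose (Y ** WK) - (Y ** WK) ** transpose (Y ** WQ))) ** OSA_B \<epsilon> K H Y) differentiable (at X)"
    using dB id by (intro diff_mm diff_transpose differentiable_scaleR differentiable_diff differentiable_const) auto
  have dE: "(\<lambda>Y::real^'d^'N. mat_exp (transpose (OSA_B \<epsilon> K H Y) ** ((\<alpha> / q) *\<^sub>R ((Y ** WQ) ** transpose (Y ** WK) - (Y ** WK) ** transpose (Y ** WQ))) ** OSA_B \<epsilon> K H Y)) differentiable (at X)"
    using differentiable_chain_at[OF dS differentiableI[OF mat_exp_deriv]] by (simp add: o_def)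
  show ?thesis unfolding eqA
    using dB dE by (intro differentiable_add diff_mm diff_transpose differentiable_diff differentiable_const) auto
qed

lemma deriv_lip:
  fixes f :: "'a::{real_normed_vector,perfect_space} \<Rightarrow> 'b::real_normed_vector"
  assumes f: "(f has_derivative f') (at x)" and d: "d > 0"
    and L: "\<And>y. norm (y - x) < d \<Longrightarrow> norm (f y - f x) \<le> L * norm (y - x)"
  shows "onorm f' \<le> L"
proof -
  have bl: "bounded_linear f'" using f by (rule has_derivative_bounded_linear)
  have "norm (f' h) \<le> L * norm h" for h
  proof (cases "h = 0")
    case True
    then show ?thesis using bl by (simp add: linear_simps)
  next
    case False
    then have nh: "norm h > 0" by simp
    show ?thesis
    proof (rule field_le_epsilon)
      fix e :: real assume e: "e > 0"
      obtain \<delta> where \<delta>: "\<delta> > 0" and D: "\<And>y. norm (y - x) < \<delta> \<Longrightarrow> norm (f y - f x - f' (y - x)) \<le> (e / norm h) * norm (y - x)"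
        using f[unfolded has_derivative_at_alt] e nh by (meson divide_pos_pos)
      define t where "t = min d \<delta> / (2 * norm h)"
      have t: "t > 0" unfolding t_def using d \<delta> nh by simp
      have nt: "norm ((x + t *\<^sub>R h) - x) = t * norm h" using t by simp
      have "t * norm h = min d \<delta> / 2" unfolding t_def using nh by simp
      moreover have "min d \<delta> > 0" using d \<delta> by simp
      ultimately have lt: "t * norm h < min d \<delta>" by linarith
      have f't: "f' (t *\<^sub>R h) = t *\<^sub>R f' h" using bl by (simp add: linear_simps)
      have "t * norm (f' h) = norm (f' ((x + t *\<^sub>R h) - x))" using t f't by simp
      also have "\<dots> \<le> norm (f (x + t *\<^sub>R h) - f x) + norm (f (x + t *\<^sub>R h) - f x - f' ((x + t *\<^sub>R h) - x))"
        by (metis norm_triangle_ineq4 diff_diff_eq2 norm_minus_commute add_diff_cancel_left' order_trans norm_diff_triangle_ineq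
             norm_triangle_sub)
      also have "\<dots> \<le> L * (t * norm h) + (e / norm h) * (t * norm h)"
        using L[of "x + t *\<^sub>R h"] D[of "x + t *\<^sub>R h"] nt lt by (intro add_mono) auto
      also have "\<dots> = t * (L * norm h + e)" using nh by (simp add: field_simps)
      finally show "norm (f' h) \<le> L * norm h + e" using t by simp
    qed
  qed
  then show ?thesis by (rule onorm_le)
qed

lemma unvecm_vecm [simp]: "unvecm (vecm A) = A"
  by (simp add: unvecm_def vecm_def vec_eq_iff)
lemma vecm_unvecm [simp]: "vecm (unvecm v) = v"
  by (simp add: unvecm_def vecm_def vec_eq_iff)
lemma vecm_diff: "vecm (A - B) = vecm A - vecm B"
  by (simp add: vecm_def vec_eq_iff)
lemma unvecm_diff: "unvecm (A - B) = unvecm A - unvecm B"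
  by (simp add: unvecm_def vec_eq_iff)

lemma sum_pairs: "(\<Sum>p\<in>UNIV. f p) = (\<Sum>a\<in>UNIV. \<Sum>b\<in>UNIV. f (a, b))"
  by (simp add: sum.cartesian_product UNIV_Times_UNIV[symmetric] del: UNIV_Times_UNIV)

lemma norm_vecm: "norm (vecm (A::real^'n^'m)) = norm A"
proof -
  have "norm (vecm A) ^ 2 = (\<Sum>j\<in>UNIV. \<Sum>i\<in>UNIV. (A $ i $ j)^2)"
    unfolding norm_sq_vec vecm_def by (simp add: sum_pairs)
  also have "\<dots> = norm A ^ 2" unfolding norm_mat_sq by (rule sum.swap)
  finally show ?thesis by (simp add: power2_eq_iff_nonneg)
qed

lemma norm_unvecm: "norm (unvecm v) = norm v"
  by (metis norm_vecm vecm_unvecm)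

lemma bl_vecm: "bounded_linear (vecm :: real^'n^'m \<Rightarrow> _)"
  apply (rule bounded_linear_intro[of _ 1])
    apply (simp add: vecm_def vec_eq_iff)
   apply (simp add: vecm_def vec_eq_iff)
  apply (simp add: norm_vecm)
  done
lemma bl_unvecm: "bounded_linear (unvecm :: real^('n\<times>'m) \<Rightarrow> real^'n^'m)"
  apply (rule bounded_linear_intro[of _ 1])
    apply (simp add: unvecm_def vec_eq_iff)
   apply (simp add: unvecm_def vec_eq_iff)
  apply (simp add: norm_unvecm)
  done

lemma norm_le_spec: "norm (X::real^'n^'m) \<le> sqrt (real CARD('n)) * spec_norm X"
proof -
  have "norm X ^ 2 = (\<Sum>j\<in>UNIV. norm (column j X) ^ 2)"
    unfolding norm_mat_sq by (subst sum.swap) (simp add: norm_sq_vec column_def)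
  also have "\<dots> \<le> (\<Sum>j\<in>(UNIV::'n set). spec_norm X ^ 2)"
    by (intro sum_mono power_mono) (simp_all add: spec_norm_def norm_column_le_onorm)
  also have "\<dots> = (sqrt (real CARD('n)) * spec_norm X) ^ 2" by (simp add: power_mult_distrib)
  finally show ?thesis
    by (rule power2_le_imp_le) (simp add: spec_norm_def onorm_pos_le matrix_vector_mul_bounded_linear)
qed

lemma onorm_kron:
  fixes P :: "real^'d^'N"
  shows "onorm (\<lambda>v. transpose (kron P (mat 1 :: real^'N^'N)) *v v) \<le> real CARD('d\<times>'N) * real CARD('N\<times>'N) * norm P"
proof -
  have "\<bar>transpose (kron P (mat 1 :: real^'N^'N)) $ i $ j\<bar> \<le> norm P" for i j
  proof -
    have "\<bar>transpose (kron P (mat 1 :: real^'N^'N)) $ i $ j\<bar> = \<bar>P $ fst j $ fst i\<bar> * \<bar>(mat 1 :: real^'N^'N) $ snd j $ snd i\<bar>"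
      by (simp add: transpose_def kron_def abs_mult)
    also have "\<dots> \<le> \<bar>P $ fst j $ fst i\<bar> * 1" by (intro mult_left_mono) (simp_all add: mat_def)
    also have "\<dots> \<le> norm P" 
    proof -
      have a: "norm (P $ fst j) \<le> norm P" by (rule Finite_Cartesian_Product.norm_nth_le)
      have b: "\<bar>P $ fst j $ fst i\<bar> \<le> norm (P $ fst j)" by (rule component_le_norm_cart)
      show ?thesis using a b by simp
    qed
    finally show ?thesis .
  qed
  then show ?thesis by (rule onorm_le_matrix_component)
qed

theorem theorem6:
  fixes \<epsilon> R :: real and K :: nat
  assumes "2 * CARD('v::finite) \<le> CARD('d::finite)"
    and "2 * CARD('v) \<le> CARD('N::finite)"
    and "\<epsilon> > 0" and "R > 0"
  shows "\<exists>C > 0. \<forall>(WQ :: real^'v^'d) (WK :: real^'v^'d) (WV :: real^'v^'d) (WO :: real^'d^'v)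
            (\<alpha> :: real) (X :: real^'d^'N).
     transpose (hcat WQ WK) ** hcat WQ WK = mat 1 \<longrightarrow>
     transpose WV ** WV = mat 1 \<longrightarrow>
     WO ** transpose WO = mat 1 \<longrightarrow>
     \<alpha> > 0 \<longrightarrow> spec_norm X \<le> R \<longrightarrow> hcat (X ** WQ) (X ** WK) \<noteq> 0 \<longrightarrow>
     (\<lambda>v. vecm (OSA_A \<epsilon> K \<alpha> WQ WK (unvecm v))) differentiable (at (vecm X)) \<and>
     spec_norm (OSA_J1 \<epsilon> K \<alpha> WQ WK WV WO X) \<le> C * \<alpha>"
proof -
  note e = assms(3) and R0 = assms(4)
  define q where "q = sqrt (real CARD('v))"
  define h where "h = sqrt (real CARD('v + 'v))"
  define \<rho> where "\<rho> = sqrt (real CARD('d)) * R + 1"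
  define c where "c = cA \<epsilon> K \<rho> q h"
  define cp where "cp = real CARD('d \<times> 'N) * real CARD('N \<times> 'N)"
  define C where "C = cp * (sqrt (real CARD('d)) * R * q * q) * c + 1"
  have \<rho>0: "\<rho> \<ge> 0" unfolding \<rho>_def using R0 by simp
  have q0: "q \<ge> 0" unfolding q_def by simp
  have c0: "c \<ge> 0" unfolding c_def by (rule cA_nonneg[OF e \<rho>0 q0]) (simp add: h_def)
  have cp0: "cp \<ge> 0" unfolding cp_def by simp
  have "0 \<le> cp * (sqrt (real CARD('d)) * R * q * q) * c"
    using c0 cp0 q0 R0 by (intro mult_nonneg_nonneg) auto
  then have C0: "C > 0" unfolding C_def by linarith
  show ?thesis
  proof (intro exI[of _ C] conjI C0 allI impI)
    fix WQ WK WV :: "real^'v^'d" and WO :: "real^'d^'v" and \<alpha> :: real and X :: "real^'d^'N"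
    assume HH: "transpose (hcat WQ WK) ** hcat WQ WK = mat 1" and V: "transpose WV ** WV = mat 1"
      and O: "WO ** transpose WO = mat 1" and a: "\<alpha> > 0" and XR: "spec_norm X \<le> R"
      and nz: "hcat (X ** WQ) (X ** WK) \<noteq> 0"
    define g :: "real^('d\<times>'N) \<Rightarrow> real^('N\<times>'N)" where "g = (\<lambda>v. vecm (OSA_A \<epsilon> K \<alpha> WQ WK (unvecm v)))"
    have nz': "X ** hcat WQ WK \<noteq> 0" using nz by (simp add: hcat_mm)
    have dA: "OSA_A \<epsilon> K \<alpha> WQ WK differentiable (at X)" by (rule A_diff[OF nz' e])
    have "(OSA_A \<epsilon> K \<alpha> WQ WK \<circ> unvecm) differentiable (at (vecm X))"
      by (rule differentiable_chain_at[OF bounded_linear_imp_differentiable[OF bl_unvecm]]) (simp add: dA)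
    then have "(vecm \<circ> (OSA_A \<epsilon> K \<alpha> WQ WK \<circ> unvecm)) differentiable (at (vecm X))"
      by (rule differentiable_chain_at) (rule bounded_linear_imp_differentiable[OF bl_vecm])
    then have dg: "g differentiable (at (vecm X))" by (simp add: g_def o_def)
    then show "(\<lambda>v. vecm (OSA_A \<epsilon> K \<alpha> WQ WK (unvecm v))) differentiable (at (vecm X))" by (simp add: g_def)
    obtain Bd where L: "lipb (OSA_A \<epsilon> K \<alpha> WQ WK :: real^'d^'N \<Rightarrow> _) (cball 0 \<rho>) (\<alpha> * c) Bd"
      using A_lip[OF HH e a \<rho>0] unfolding c_def q_def h_def by blast
    have nX: "norm X \<le> sqrt (real CARD('d)) * R"
      using order_trans[OF norm_le_spec[of X] mult_left_mono[OF XR, of "sqrt (real CARD('d))"]] by simp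
    have X\<rho>: "X \<in> cball 0 \<rho>" using nX unfolding \<rho>_def by simp
    have J: "onorm (\<lambda>v. jacobian g (at (vecm X)) *v v) \<le> \<alpha> * c"
    proof (rule deriv_lip[OF jacobian_works[THEN iffD1, OF dg], of 1])
      fix y assume y: "norm (y - vecm X) < 1"
      have nY: "norm (unvecm y - X) = norm (y - vecm X)"
        by (metis norm_unvecm unvecm_diff unvecm_vecm)
      have "norm (unvecm y) \<le> norm X + norm (unvecm y - X)" by (metis norm_triangle_sub)
      then have Y\<rho>: "unvecm y \<in> cball 0 \<rho>" using nX nY y unfolding \<rho>_def by simp
      have "norm (g y - g (vecm X)) = norm (OSA_A \<epsilon> K \<alpha> WQ WK (unvecm y) - OSA_A \<epsilon> K \<alpha> WQ WK X)"
        unfolding g_def by (simp add: vecm_diff[symmetric] norm_vecm)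
      also have "\<dots> \<le> \<alpha> * c * norm (unvecm y - X)" by (rule lipbD[OF L Y\<rho> X\<rho>])
      finally show "norm (g y - g (vecm X)) \<le> \<alpha> * c * norm (y - vecm X)" using nY by simp
    qed simp
    have nV: "norm WV = q" unfolding q_def by (rule norm_orthcols[OF V])
    have nO: "norm WO = q"
      using norm_orthcols[of "transpose WO"] O norm_transpose[of WO] unfolding q_def by simp
    have nP: "norm (X ** WV ** WO) \<le> sqrt (real CARD('d)) * R * q * q"
    proof -
      have "norm (X ** WV ** WO) \<le> norm (X ** WV) * norm WO" by (rule norm_mm_le)
      also have "\<dots> \<le> (norm X * norm WV) * norm WO" by (intro mult_right_mono norm_mm_le) simp
      also have "\<dots> \<le> (sqrt (real CARD('d)) * R * q) * q" unfolding nV nO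
        using nX q0 by (intro mult_right_mono) auto
      finally show ?thesis .
    qed
    let ?T = "transpose (kron (X ** WV ** WO) (mat 1 :: real^'N^'N))"
    let ?J = "jacobian g (at (vecm X))"
    have eqJ: "OSA_J1 \<epsilon> K \<alpha> WQ WK WV WO X = ?T ** ?J" unfolding OSA_J1_def g_def ..
    have eqf: "(\<lambda>v. (?T ** ?J) *v v) = (\<lambda>v. ?T *v v) \<circ> (\<lambda>v. ?J *v v)"
      by (rule ext) (simp only: comp_apply matrix_vector_mul_assoc)
    have "spec_norm (OSA_J1 \<epsilon> K \<alpha> WQ WK WV WO X) = onorm ((\<lambda>v. ?T *v v) \<circ> (\<lambda>v. ?J *v v))"
      unfolding eqJ spec_norm_def eqf ..
    also have "\<dots> \<le> onorm (\<lambda>v. ?T *v v) * onorm (\<lambda>v. ?J *v v)"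
      by (rule onorm_compose) (rule matrix_vector_mul_bounded_linear)+
    also have "\<dots> \<le> (cp * (sqrt (real CARD('d)) * R * q * q)) * (\<alpha> * c)"
    proof (rule mult_mono[OF _ J])
      show "onorm (\<lambda>v. ?T *v v) \<le> cp * (sqrt (real CARD('d)) * R * q * q)"
        using onorm_kron[of "X ** WV ** WO"] mult_left_mono[OF nP cp0] unfolding cp_def by linarith
      show "0 \<le> cp * (sqrt (real CARD('d)) * R * q * q)" using cp0 q0 R0 by simp
      show "0 \<le> onorm (\<lambda>v. ?J *v v)" by (simp add: onorm_pos_le matrix_vector_mul_bounded_linear)
    qed
    also have "\<dots> \<le> C * \<alpha>" unfolding C_def using a by (simp add: algebra_simps)
    finally show "spec_norm (OSA_J1 \<epsilon> K \<alpha> WQ WK WV WO X) \<le> C * \<alpha>" .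
  qed
qed

end
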